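(* If a quasi-discrete closure model $\mathcal{M}=((X,\mathcal{C}_R),\mathcal{V})$ is finitely closed and finitely backward closed, then for all $x_1,x_2\in X$, $x_1\equiv_{SLCS}x_2$ implies $x_1\simeq x_2$.
   Context: Quasi-discrete closure model: $\mathcal{C}_R(A)=A\cup\{x\mid\exists a\in A.\ aRx\}$, $\vec{\mathcal{C}}(x)=\mathcal{C}_R(\{x\})$, $\overleftarrow{\mathcal{C}}(x)=\mathcal{C}_{R^{-1}}(\{x\})$, $\mathcal{V}:AP\to\mathcal{P}(X)$, $\mathcal{V}^{-1}(x)=\{p\mid x\in\mathcal{V}(p)\}$; finitely (backward) closed: all $\vec{\mathcal{C}}(x)$ (resp. $\overleftarrow{\mathcal{C}}(x)$) finite. A function $f$ between closure spaces $(X_1,\mathcal{C}_1),(X_2,\mathcal{C}_2)$ is continuous if $f[\mathcal{C}_1(A)]\subseteq\mathcal{C}_2(f[A])$ for all $A$. A path is a continuous function $\pi:(\mathbb{N},\mathcal{C}_{succ})\to(X,\mathcal{C}_R)$, where $\mathcal{C}_{succ}$ is the closure based on the successor relation $\{(n,n+1)\}$. SLCS formulas: $\Phi::=p\mid\neg\Phi\mid\Phi\lor\Phi\mid\vec\rho\,\Phi_1[\Phi_2]\mid\overleftarrow\rho\,\Phi_1[\Phi_2]$ with $p\in AP$. Semantics: $x\models p$ iff $x\in\mathcal{V}(p)$; Boolean cases standard; $x\models\vec\rho\,\Phi_1[\Phi_2]$ iff there are a path $\pi$ and $\ell\in\mathbb{N}$ with $\pi(0)=x$, $\pi(\ell)\models\Phi_1$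 and $\pi(j)\models\Phi_2$ for all $0<j<\ell$; $x\models\overleftarrow\rho\,\Phi_1[\Phi_2]$ iff there are a path $\pi$ and $\ell$ with $\pi(\ell)=x$, $\pi(0)\models\Phi_1$ and $\pi(j)\models\Phi_2$ for all $0<j<\ell$. $x_1\equiv_{SLCS}x_2$ iff they satisfy the same SLCS formulas. Class-based bisimilarity $\simeq$: union of all non-empty equivalence relations $B$ such that $(x_1,x_2)\in B$ implies $\mathcal{V}^{-1}(x_1)=\mathcal{V}^{-1}(x_2)$ and for all $C\in X/B$, $\vec{\mathcal{C}}(x_1)\cap C\neq\emptyset\iff\vec{\mathcal{C}}(x_2)\cap C\neq\emptyset$ and $\overleftarrow{\mathcal{C}}(x_1)\cap C\neq\emptyset\iff\overleftarrow{\mathcal{C}}(x_2)\cap C\neq\emptyset$. *)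

theory Defs
  imports Main
begin

text \<open>Closure operator induced by a relation R (quasi-discrete closure).
  The carrier X of the model is the universe of the type 'a.\<close>
definition clos :: "('a \<times> 'a) set \<Rightarrow> 'a set \<Rightarrow> 'a set" where
  "clos R A = A \<union> {x. \<exists>a\<in>A. (a, x) \<in> R}"

definition fwd_clos :: "('a \<times> 'a) set \<Rightarrow> 'a \<Rightarrow> 'a set" where
  "fwd_clos R x = clos R {x}"

definition bwd_clos :: "('a \<times> 'a) set \<Rightarrow> 'a \<Rightarrow> 'a set" where
  "bwd_clos R x = clos (R\<inverse>) {x}"

definition Vinv :: "('p \<Rightarrow> 'a set) \<Rightarrow> 'a \<Rightarrow> 'p set" where
  "Vinv V x = {p. x \<in> V p}"

definition finitely_closed :: "('a \<times> 'a) set \<Rightarrow> bool" where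
  "finitely_closed R \<longleftrightarrow> (\<forall>x. finite (fwd_clos R x))"

definition finitely_backward_closed :: "('a \<times> 'a) set \<Rightarrow> bool" where
  "finitely_backward_closed R \<longleftrightarrow> (\<forall>x. finite (bwd_clos R x))"

definition continuous_clos :: "('a set \<Rightarrow> 'a set) \<Rightarrow> ('b set \<Rightarrow> 'b set) \<Rightarrow> ('a \<Rightarrow> 'b) \<Rightarrow> bool" where
  "continuous_clos C1 C2 f \<longleftrightarrow> (\<forall>A. f ` (C1 A) \<subseteq> C2 (f ` A))"

definition succ_rel :: "(nat \<times> nat) set" where
  "succ_rel = {(n, Suc n) | n. True}"

definition is_path :: "('a \<times> 'a) set \<Rightarrow> (nat \<Rightarrow> 'a) \<Rightarrow> bool" where
  "is_path R \<pi> \<longleftrightarrow> continuous_clos (clos succ_rel) (clos R) \<pi>"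

datatype 'p slcs =
    Atom 'p
  | Neg "'p slcs"
  | Or "'p slcs" "'p slcs"
  | RhoF "'p slcs" "'p slcs"
  | RhoB "'p slcs" "'p slcs"

fun sat :: "('a \<times> 'a) set \<Rightarrow> ('p \<Rightarrow> 'a set) \<Rightarrow> 'a \<Rightarrow> 'p slcs \<Rightarrow> bool" where
  "sat R V x (Atom p) \<longleftrightarrow> x \<in> V p"
| "sat R V x (Neg \<Phi>) \<longleftrightarrow> \<not> sat R V x \<Phi>"
| "sat R V x (Or \<Phi>1 \<Phi>2) \<longleftrightarrow> sat R V x \<Phi>1 \<or> sat R V x \<Phi>2"
| "sat R V x (RhoF \<Phi>1 \<Phi>2) \<longleftrightarrow>
     (\<exists>\<pi> l. is_path R \<pi> \<and> \<pi> 0 = x \<and> sat R V (\<pi> l) \<Phi>1 \<and> (\<forall>j. 0 < j \<and> j < l \<longrightarrow> sat R V (\<pi> j) \<Phi>2))"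
| "sat R V x (RhoB \<Phi>1 \<Phi>2) \<longleftrightarrow>
     (\<exists>\<pi> l. is_path R \<pi> \<and> \<pi> l = x \<and> sat R V (\<pi> 0) \<Phi>1 \<and> (\<forall>j. 0 < j \<and> j < l \<longrightarrow> sat R V (\<pi> j) \<Phi>2))"

definition slcs_equiv :: "('a \<times> 'a) set \<Rightarrow> ('p \<Rightarrow> 'a set) \<Rightarrow> 'a \<Rightarrow> 'a \<Rightarrow> bool" where
  "slcs_equiv R V x1 x2 \<longleftrightarrow> (\<forall>\<Phi>. sat R V x1 \<Phi> \<longleftrightarrow> sat R V x2 \<Phi>)"

definition class_bisim :: "('a \<times> 'a) set \<Rightarrow> ('p \<Rightarrow> 'a set) \<Rightarrow> ('a \<times> 'a) set \<Rightarrow> bool" where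
  "class_bisim R V B \<longleftrightarrow> B \<noteq> {} \<and> equiv UNIV B \<and>
     (\<forall>(x1, x2)\<in>B. Vinv V x1 = Vinv V x2 \<and>
        (\<forall>C\<in>UNIV // B.
           (fwd_clos R x1 \<inter> C \<noteq> {} \<longleftrightarrow> fwd_clos R x2 \<inter> C \<noteq> {}) \<and>
           (bwd_clos R x1 \<inter> C \<noteq> {} \<longleftrightarrow> bwd_clos R x2 \<inter> C \<noteq> {})))"

definition cbisimilar :: "('a \<times> 'a) set \<Rightarrow> ('p \<Rightarrow> 'a set) \<Rightarrow> 'a \<Rightarrow> 'a \<Rightarrow> bool" where
  "cbisimilar R V x1 x2 \<longleftrightarrow> (x1, x2) \<in> \<Union>{B. class_bisim R V B}"

end

theory Submission
  imports Defs
begin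

lemma path_step: "is_path R \<pi> \<Longrightarrow> \<pi> (Suc n) \<in> clos R {\<pi> n}"
proof -
  assume "is_path R \<pi>"
  then have "\<pi> ` clos succ_rel {n} \<subseteq> clos R (\<pi> ` {n})"
    unfolding is_path_def continuous_clos_def by blast
  moreover have "Suc n \<in> clos succ_rel {n}" by (simp add: clos_def succ_rel_def)
  ultimately show ?thesis by auto
qed

lemma path_intro: "(\<And>n. \<pi> (Suc n) \<in> clos R {\<pi> n}) \<Longrightarrow> is_path R \<pi>"
  unfolding is_path_def continuous_clos_def
proof (intro allI subsetI)
  fix A y
  assume h: "\<And>n. \<pi> (Suc n) \<in> clos R {\<pi> n}" and y: "y \<in> \<pi> ` clos succ_rel A"
  then obtain x where x: "x \<in> clos succ_rel A" "y = \<pi> x" by auto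
  show "y \<in> clos R (\<pi> ` A)"
  proof (cases "x \<in> A")
    case True then show ?thesis using x by (auto simp: clos_def)
  next
    case False
    then obtain a where a: "a \<in> A" "x = Suc a" using x by (auto simp: clos_def succ_rel_def)
    then show ?thesis using h[of a] x by (auto simp: clos_def)
  qed
qed

definition And' :: "'p slcs \<Rightarrow> 'p slcs \<Rightarrow> 'p slcs" where
  "And' a b = Neg (Or (Neg a) (Neg b))"

lemma sat_And[simp]: "sat R V x (And' a b) \<longleftrightarrow> sat R V x a \<and> sat R V x b"
  by (simp add: And'_def)

definition Fls :: "'p slcs" where "Fls = Neg (Or (Atom undefined) (Neg (Atom undefined)))"

lemma sat_Fls[simp]: "\<not> sat R V x Fls" by (simp add: Fls_def)

lemma distinguish:
  assumes "finite S" "\<forall>y\<in>S. \<not> slcs_equiv R V c y"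
  shows "\<exists>\<phi>. sat R V c \<phi> \<and> (\<forall>y\<in>S. \<not> sat R V y \<phi>)"
  using assms
proof (induction S rule: finite_induct)
  case empty
  show ?case by (rule exI[of _ "Neg Fls"]) simp
next
  case (insert y S)
  then obtain \<phi> where p: "sat R V c \<phi>" "\<forall>y\<in>S. \<not> sat R V y \<phi>" by auto
  from insert.prems have "\<not> slcs_equiv R V c y" by auto
  then obtain \<psi> where "sat R V c \<psi> \<noteq> sat R V y \<psi>" unfolding slcs_equiv_def by auto
  then obtain \<chi> where q: "sat R V c \<chi>" "\<not> sat R V y \<chi>"
  proof (cases "sat R V c \<psi>")
    case True then show ?thesis using \<open>sat R V c \<psi> \<noteq> sat R V y \<psi>\<close> that by auto
  next
    case False then show ?thesis using \<open>sat R V c \<psi> \<noteq> sat R V y \<psi>\<close> that[of "Neg \<psi>"] by auto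
  qed
  show ?case by (rule exI[of _ "And' \<phi> \<chi>"]) (use p q in auto)
qed

lemma equiv_sym: "slcs_equiv R V a b \<Longrightarrow> slcs_equiv R V b a"
  by (simp add: slcs_equiv_def)
lemma equiv_trans: "slcs_equiv R V a b \<Longrightarrow> slcs_equiv R V b c \<Longrightarrow> slcs_equiv R V a c"
  by (simp add: slcs_equiv_def)

lemma fwd_transfer:
  assumes fc: "finitely_closed R" and e: "slcs_equiv R V x1 x2"
    and y: "y \<in> fwd_clos R x1" "slcs_equiv R V c y"
  shows "\<exists>z\<in>fwd_clos R x2. slcs_equiv R V c z"
proof (rule ccontr)
  assume "\<not> ?thesis"
  moreover have "finite (fwd_clos R x2)" using fc by (simp add: finitely_closed_def)
  ultimately obtain \<phi> where p: "sat R V c \<phi>" "\<forall>z\<in>fwd_clos R x2. \<not> sat R V z \<phi>"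
    using distinguish[of "fwd_clos R x2" R V c] by blast
  have yphi: "sat R V y \<phi>" using p y(2) by (simp add: slcs_equiv_def)
  define \<pi> where "\<pi> = (\<lambda>n::nat. if n = 0 then x1 else y)"
  have "is_path R \<pi>"
    by (rule path_intro) (use y(1) in \<open>auto simp: \<pi>_def fwd_clos_def clos_def\<close>)
  moreover have "\<pi> 0 = x1" "sat R V (\<pi> 1) \<phi>" "\<forall>j. 0 < j \<and> j < (1::nat) \<longrightarrow> sat R V (\<pi> j) Fls"
    using yphi by (auto simp: \<pi>_def)
  ultimately have "sat R V x1 (RhoF \<phi> Fls)"
    by (simp only: sat.simps) blast
  then have "sat R V x2 (RhoF \<phi> Fls)" using e unfolding slcs_equiv_def by blast
  then obtain \<sigma> l where s: "is_path R \<sigma>" "\<sigma> 0 = x2" "sat R V (\<sigma> l) \<phi>"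
      "\<forall>j. 0 < j \<and> j < l \<longrightarrow> sat R V (\<sigma> j) Fls" by (simp only: sat.simps) blast
  have "l \<le> 1" proof (rule ccontr)
    assume "\<not> l \<le> 1" then have "0 < (1::nat) \<and> 1 < l" by simp
    then have "sat R V (\<sigma> 1) Fls" using s(4) by blast
    then show False by simp
  qed
  then have "\<sigma> l \<in> fwd_clos R x2"
  proof (cases l)
    case 0 then show ?thesis using s by (simp add: fwd_clos_def clos_def)
  next
    case (Suc m) then have "l = 1" using \<open>l \<le> 1\<close> by simp
    then show ?thesis using path_step[OF s(1), of 0] s(2) by (simp add: fwd_clos_def)
  qed
  then show False using p s(3) by blast
qed

lemma bwd_transfer:
  assumes fc: "finitely_backward_closed R" and e: "slcs_equiv R V x1 x2"
    and y: "y \<in> bwd_clos R x1" "slcs_equiv R V c y"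
  shows "\<exists>z\<in>bwd_clos R x2. slcs_equiv R V c z"
proof (rule ccontr)
  assume "\<not> ?thesis"
  moreover have "finite (bwd_clos R x2)" using fc by (simp add: finitely_backward_closed_def)
  ultimately obtain \<phi> where p: "sat R V c \<phi>" "\<forall>z\<in>bwd_clos R x2. \<not> sat R V z \<phi>"
    using distinguish[of "bwd_clos R x2" R V c] by blast
  have yphi: "sat R V y \<phi>" using p y(2) by (simp add: slcs_equiv_def)
  define \<pi> where "\<pi> = (\<lambda>n::nat. if n = 0 then y else x1)"
  have "is_path R \<pi>"
    by (rule path_intro) (use y(1) in \<open>auto simp: \<pi>_def bwd_clos_def clos_def\<close>)
  moreover have "\<pi> 1 = x1" "sat R V (\<pi> 0) \<phi>" "\<forall>j. 0 < j \<and> j < (1::nat) \<longrightarrow> sat R V (\<pi> j) Fls"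
    using yphi by (auto simp: \<pi>_def)
  ultimately have "sat R V x1 (RhoB \<phi> Fls)"
    by (simp only: sat.simps) blast
  then have "sat R V x2 (RhoB \<phi> Fls)" using e unfolding slcs_equiv_def by blast
  then obtain \<sigma> l where s: "is_path R \<sigma>" "\<sigma> l = x2" "sat R V (\<sigma> 0) \<phi>"
      "\<forall>j. 0 < j \<and> j < l \<longrightarrow> sat R V (\<sigma> j) Fls" by (simp only: sat.simps) blast
  have "l \<le> 1" proof (rule ccontr)
    assume "\<not> l \<le> 1" then have "0 < (1::nat) \<and> 1 < l" by simp
    then have "sat R V (\<sigma> 1) Fls" using s(4) by blast
    then show False by simp
  qed
  then have "\<sigma> 0 \<in> bwd_clos R x2"
  proof (cases l)
    case 0 then show ?thesis using s by (simp add: bwd_clos_def clos_def)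
  next
    case (Suc m) then have "l = 1" using \<open>l \<le> 1\<close> by simp
    then show ?thesis using path_step[OF s(1), of 0] s(2) by (auto simp: bwd_clos_def clos_def)
  qed
  then show False using p s(3) by blast
qed

theorem lemma4:
  fixes R :: "('a \<times> 'a) set" and V :: "'p \<Rightarrow> 'a set"
  assumes "finitely_closed R" and "finitely_backward_closed R"
  shows "\<forall>x1 x2. slcs_equiv R V x1 x2 \<longrightarrow> cbisimilar R V x1 x2"
proof (intro allI impI)
  fix x1 x2 assume e: "slcs_equiv R V x1 x2"
  define B where "B = {(a, b). slcs_equiv R V a b}"
  have eq: "equiv UNIV B"
    unfolding B_def equiv_def refl_on_def sym_def trans_def slcs_equiv_def by auto
  have "class_bisim R V B"
    unfolding class_bisim_def
  proof (intro conjI ballI)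
    show "B \<noteq> {}" using e B_def by auto
    show "equiv UNIV B" by (rule eq)
  next
    fix p assume pB: "p \<in> B"
    obtain a b where ab: "p = (a, b)" by (cases p)
    have eab: "slcs_equiv R V a b" using pB ab B_def by auto
    have V: "Vinv V a = Vinv V b"
      using eab unfolding Vinv_def slcs_equiv_def by (metis sat.simps(1))
    have cls: "(fwd_clos R a \<inter> C \<noteq> {} \<longleftrightarrow> fwd_clos R b \<inter> C \<noteq> {}) \<and>
           (bwd_clos R a \<inter> C \<noteq> {} \<longleftrightarrow> bwd_clos R b \<inter> C \<noteq> {})" if C: "C \<in> UNIV // B" for C
    proof -
      obtain c where Cc: "C = {y. slcs_equiv R V c y}"
        using C unfolding quotient_def B_def by auto
      show ?thesis unfolding Cc
        using fwd_transfer[OF assms(1) eab] fwd_transfer[OF assms(1) equiv_sym[OF eab]]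
          bwd_transfer[OF assms(2) eab] bwd_transfer[OF assms(2) equiv_sym[OF eab]]
        by blast
    qed
    show "case p of (x1, x2) \<Rightarrow> Vinv V x1 = Vinv V x2 \<and>
        (\<forall>C\<in>UNIV // B.
           (fwd_clos R x1 \<inter> C \<noteq> {} \<longleftrightarrow> fwd_clos R x2 \<inter> C \<noteq> {}) \<and>
           (bwd_clos R x1 \<inter> C \<noteq> {} \<longleftrightarrow> bwd_clos R x2 \<inter> C \<noteq> {}))"
      using V cls ab by simp
  qed
  then show "cbisimilar R V x1 x2" unfolding cbisimilar_def using e B_def by auto
qed

end
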